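(* Let $f\in\mathbf{C}\{X,Y\}$ be a nonzero power series without constant term such that the curve $f=0$ is reduced, and let $l\in\mathbf{C}\{X,Y\}$ be a power series without constant term with $\operatorname{ord} l=1$. Let $J(f,l)=\frac{\partial f}{\partial X}\frac{\partial l}{\partial Y}-\frac{\partial f}{\partial Y}\frac{\partial l}{\partial X}$ and assume $J(f,l)(0,0)=0$. Then $l$ does not divide $f$ in $\mathbf{C}\{X,Y\}$ (i.e. $l=0$ is not a branch of $f=0$) if and only if $l$ does not divide $J(f,l)$ (i.e. $l=0$ is not a branch of the curve $J(f,l)=0$).
   Context: $\mathbf{C}\{X,Y\}$ denotes the ring of convergent complex power series in $X,Y$. A curve $f=0$ is reduced if $f$ has no multiple irreducible factors; the branches of $f=0$ are the curves $f_i=0$ for the irreducible factors $f_i$ of $f$. The curve $l=0$ with $\operatorname{ord} l=1$ is called regular. *)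

theory Defs
  imports "HOL-Analysis.Analysis" "HOL-Library.Extended_Nat"
begin

text \<open>A bivariate complex power series is represented by its coefficient function:
  a i j is the coefficient of X^i Y^j.\<close>
type_synonym cps = "nat \<Rightarrow> nat \<Rightarrow> complex"

definition convergent_ps :: "cps \<Rightarrow> bool" where
  "convergent_ps a \<longleftrightarrow>
     (\<exists>r::real. r > 0 \<and> (\<lambda>(i,j). norm (a i j) * r ^ (i + j)) summable_on (UNIV :: (nat \<times> nat) set))"

definition ps_zero :: cps where "ps_zero = (\<lambda>_ _. 0)"
definition ps_one :: cps where "ps_one = (\<lambda>i j. if i = 0 \<and> j = 0 then 1 else 0)"

definition ps_mul :: "cps \<Rightarrow> cps \<Rightarrow> cps" where
  "ps_mul a b = (\<lambda>i j. \<Sum>p\<le>i. \<Sum>q\<le>j. a p q * b (i - p) (j - q))"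

definition ps_sub :: "cps \<Rightarrow> cps \<Rightarrow> cps" where
  "ps_sub a b = (\<lambda>i j. a i j - b i j)"

definition ps_dX :: "cps \<Rightarrow> cps" where
  "ps_dX a = (\<lambda>i j. of_nat (Suc i) * a (Suc i) j)"
definition ps_dY :: "cps \<Rightarrow> cps" where
  "ps_dY a = (\<lambda>i j. of_nat (Suc j) * a i (Suc j))"

definition ps_jac :: "cps \<Rightarrow> cps \<Rightarrow> cps" where
  "ps_jac f l = ps_sub (ps_mul (ps_dX f) (ps_dY l)) (ps_mul (ps_dY f) (ps_dX l))"

definition ps_ord :: "cps \<Rightarrow> enat" where
  "ps_ord a = (if a = ps_zero then \<infinity>
               else enat (LEAST n. \<exists>i j. i + j = n \<and> a i j \<noteq> 0))"

definition ps_dvd :: "cps \<Rightarrow> cps \<Rightarrow> bool" where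
  "ps_dvd g f \<longleftrightarrow> (\<exists>h. convergent_ps h \<and> f = ps_mul g h)"

definition ps_unit :: "cps \<Rightarrow> bool" where
  "ps_unit u \<longleftrightarrow> convergent_ps u \<and> (\<exists>v. convergent_ps v \<and> ps_mul u v = ps_one)"

definition ps_irreducible :: "cps \<Rightarrow> bool" where
  "ps_irreducible g \<longleftrightarrow> convergent_ps g \<and> g \<noteq> ps_zero \<and> \<not> ps_unit g \<and>
     (\<forall>a b. convergent_ps a \<and> convergent_ps b \<and> g = ps_mul a b \<longrightarrow> ps_unit a \<or> ps_unit b)"

definition ps_reduced :: "cps \<Rightarrow> bool" where
  "ps_reduced f \<longleftrightarrow> \<not> (\<exists>g. ps_irreducible g \<and> ps_dvd (ps_mul g g) f)"

end

theory Submission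
  imports Defs "HOL-Computational_Algebra.Formal_Power_Series"
begin

unbundle no vec_syntax
notation fps_nth (infixl \<open>$\<close> 75)


lemma mul_prod: "ps_mul a b i j = (\<Sum>x\<in>{..i}\<times>{..j}. a (fst x) (snd x) * b (i - fst x) (j - snd x))"
  by (simp add: ps_mul_def sum.cartesian_product case_prod_beta)

lemma sum_single:
  assumes "finite A" "cc \<in> A" "\<And>x. x \<in> A \<Longrightarrow> x \<noteq> cc \<Longrightarrow> g x = 0"
  shows "sum g A = g cc"
proof -
  have "sum g A = g cc + sum g (A - {cc})" using assms by (simp add: sum.remove)
  also have "sum g (A - {cc}) = 0" using assms by (intro sum.neutral) auto
  finally show ?thesis by simp
qed

lemma sum_nz_ex: "sum g A \<noteq> (0::'a::comm_monoid_add) \<Longrightarrow> \<exists>x\<in>A. g x \<noteq> 0"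
  by (metis sum.neutral)

lemma lemB:
  assumes eq: "ps_mul s w = ps_mul l m" and sY: "\<And>i j. j > 0 \<Longrightarrow> s i j = 0"
    and w0: "w 0 0 \<noteq> 0" and l0: "l 0 0 = 0" and b: "l 0 1 \<noteq> 0"
  shows "s i 0 = 0"
proof (rule ccontr)
  assume "s i 0 \<noteq> 0"
  define n where "n = (LEAST i. s i 0 \<noteq> 0)"
  have sn: "s n 0 \<noteq> 0" unfolding n_def using \<open>s i 0 \<noteq> 0\<close> by (rule LeastI)
  have sbelow: "s p 0 = 0" if "p < n" for p using not_less_Least[of p "\<lambda>i. s i 0 \<noteq> 0"] that n_def by blast
  have sw: "ps_mul s w i j = (\<Sum>p\<le>i. s p 0 * w (i - p) j)" for i j
  proof -
    have "ps_mul s w i j = (\<Sum>p\<le>i. \<Sum>q\<le>j. s p q * w (i - p) (j - q))" by (simp add: ps_mul_def)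
    also have "\<dots> = (\<Sum>p\<le>i. s p 0 * w (i - p) j)"
    proof (rule sum.cong[OF refl])
      fix p assume "p \<in> {..i}"
      show "(\<Sum>q\<le>j. s p q * w (i - p) (j - q)) = s p 0 * w (i - p) j"
        by (subst sum_single[where cc=0]) (auto simp: sY)
    qed
    finally show ?thesis .
  qed
  have swn: "ps_mul s w n 0 = s n 0 * w 0 0"
    unfolding sw by (subst sum_single[where cc=n]) (auto simp: sbelow)
  have swnz: "\<exists>p\<le>i. s p 0 \<noteq> 0" if "ps_mul s w i j \<noteq> 0" for i j
    using sum_nz_ex[OF that[unfolded sw]] by auto
  have mnz: "m \<noteq> ps_zero"
  proof
    assume "m = ps_zero"
    then have "ps_mul l m n 0 = 0" by (simp add: ps_mul_def ps_zero_def)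
    then show False using swn eq sn w0 by simp
  qed
  then obtain i1 j1 where "m i1 j1 \<noteq> 0" unfolding ps_zero_def by (meson ext)
  then have ex: "\<exists>i\<le>i1+j1. m i (i1 + j1 - i) \<noteq> 0" by (intro exI[of _ i1]) auto
  define d where "d = (LEAST d. \<exists>i\<le>d. m i (d - i) \<noteq> 0)"
  have dex: "\<exists>i\<le>d. m i (d - i) \<noteq> 0" unfolding d_def by (rule LeastI_ex) (use ex in blast)
  have mlow: "m i j = 0" if "i + j < d" for i j
  proof (rule ccontr)
    assume "m i j \<noteq> 0"
    then have "\<exists>i'\<le>i+j. m i' (i + j - i') \<noteq> 0" by (intro exI[of _ i]) auto
    then have "d \<le> i + j" unfolding d_def by (rule Least_le)
    then show False using that by simp
  qed
  define i0 where "i0 = (LEAST i. i \<le> d \<and> m i (d - i) \<noteq> 0)"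
  have i0: "i0 \<le> d" "m i0 (d - i0) \<noteq> 0" unfolding i0_def using LeastI_ex[OF dex] by auto
  have i0min: "m i (d - i) = 0" if "i < i0" for i
    using not_less_Least[OF that[unfolded i0_def]] that i0(1) unfolding i0_def by auto
  have lmlow: "ps_mul l m i j = 0" if "i + j \<le> d" for i j
    unfolding mul_prod
  proof (rule sum.neutral, intro ballI)
    fix x assume x: "x \<in> {..i} \<times> {..j}"
    show "l (fst x) (snd x) * m (i - fst x) (j - snd x) = 0"
    proof (cases "fst x = 0 \<and> snd x = 0")
      case True then show ?thesis using l0 by (simp add: prod_eq_iff)
    next
      case False
      then have "(i - fst x) + (j - snd x) < d" using x that by auto
      then show ?thesis using mlow by simp
    qed
  qed
  have "n > d"
  proof (rule ccontr)
    assume "\<not> n > d"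
    then have "ps_mul l m n 0 = 0" by (intro lmlow) simp
    then show False using swn eq sn w0 by simp
  qed
  have key: "ps_mul l m i0 (Suc (d - i0)) = l 0 1 * m i0 (d - i0)"
    unfolding mul_prod
  proof (subst sum_single[where cc="(0,1)"])
    show "finite ({..i0} \<times> {..Suc (d - i0)})" by simp
    show "(0, 1) \<in> {..i0} \<times> {..Suc (d - i0)}" by simp
    show "l (fst x) (snd x) * m (i0 - fst x) (Suc (d - i0) - snd x) = 0"
      if x: "x \<in> {..i0} \<times> {..Suc (d - i0)}" "x \<noteq> (0, 1)" for x
    proof -
      obtain p q where pq: "x = (p, q)" by fastforce
      consider "p = 0 \<and> q = 0" | "p = 1 \<and> q = 0" | "p + q \<ge> 2" using x pq by fastforce
      then show ?thesis
      proof cases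
        case 1 then show ?thesis using pq l0 by simp
      next
        case 2
        then have "i0 - 1 < i0" "d - (i0 - 1) = Suc (d - i0)" using x pq i0(1) by auto
        then show ?thesis using 2 pq i0min[of "i0 - 1"] by simp
      next
        case 3
        then have "(i0 - p) + (Suc (d - i0) - q) < d" using x pq i0(1) by auto
        then show ?thesis using pq mlow by simp
      qed
    qed
  qed simp
  then have "ps_mul s w i0 (Suc (d - i0)) \<noteq> 0" using eq b i0(2) by simp
  then obtain p where "p \<le> i0" "s p 0 \<noteq> 0" using swnz by blast
  then have "n \<le> p" unfolding n_def by (intro Least_le)
  then show False using \<open>p \<le> i0\<close> i0(1) \<open>n > d\<close> by simp
qed



definition bnd :: "cps \<Rightarrow> real \<Rightarrow> real \<Rightarrow> bool" where
  "bnd a r B \<longleftrightarrow> (\<forall>S. finite S \<longrightarrow> (\<Sum>x\<in>S. norm (a (fst x) (snd x)) * r ^ (fst x + snd x)) \<le> B)"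

lemma conv_iff: "convergent_ps a \<longleftrightarrow> (\<exists>r>0. \<exists>B. bnd a r B)"
proof
  assume "convergent_ps a"
  then obtain r where r: "r > 0" and s: "(\<lambda>(i,j). norm (a i j) * r ^ (i + j)) summable_on (UNIV :: (nat \<times> nat) set)"
    unfolding convergent_ps_def by blast
  have "bnd a r (infsum (\<lambda>(i,j). norm (a i j) * r ^ (i + j)) UNIV)"
    unfolding bnd_def
  proof (intro allI impI)
    fix S :: "(nat\<times>nat) set" assume "finite S"
    have "sum (\<lambda>(i,j). norm (a i j) * r ^ (i + j)) S \<le> infsum (\<lambda>(i,j). norm (a i j) * r ^ (i + j)) UNIV"
      by (rule finite_sum_le_infsum) (use s \<open>finite S\<close> r in auto)
    then show "(\<Sum>x\<in>S. norm (a (fst x) (snd x)) * r ^ (fst x + snd x)) \<le> infsum (\<lambda>(i,j). norm (a i j) * r ^ (i + j)) UNIV"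
      by (simp add: case_prod_beta)
  qed
  with r show "\<exists>r>0. \<exists>B. bnd a r B" by blast
next
  assume "\<exists>r>0. \<exists>B. bnd a r B"
  then obtain r B where r: "r > 0" and b: "bnd a r B" by blast
  have "(\<lambda>(i,j). norm (a i j) * r ^ (i + j)) summable_on (UNIV :: (nat \<times> nat) set)"
  proof (rule nonneg_bdd_above_summable_on)
    show "\<And>x. x \<in> UNIV \<Longrightarrow> 0 \<le> (case x of (i, j) \<Rightarrow> norm (a i j) * r ^ (i + j))"
      using r by auto
    show "bdd_above (sum (\<lambda>(i,j). norm (a i j) * r ^ (i + j)) ` {F. F \<subseteq> UNIV \<and> finite F})"
      unfolding bdd_above_def using b unfolding bnd_def by (auto simp: case_prod_beta)
  qed
  with r show "convergent_ps a" unfolding convergent_ps_def by blast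
qed

lemma bnd_nonneg: "bnd a r B \<Longrightarrow> 0 \<le> B"
  unfolding bnd_def by (erule allE[of _ "{}"]) simp

lemma bnd_mono_r:
  assumes "bnd a r B" "0 < r'" "r' \<le> r" shows "bnd a r' B"
  unfolding bnd_def
proof (intro allI impI)
  fix S :: "(nat\<times>nat) set" assume "finite S"
  have "(\<Sum>x\<in>S. norm (a (fst x) (snd x)) * r' ^ (fst x + snd x)) \<le> (\<Sum>x\<in>S. norm (a (fst x) (snd x)) * r ^ (fst x + snd x))"
    by (intro sum_mono mult_left_mono power_mono) (use assms in auto)
  also have "\<dots> \<le> B" using assms(1) \<open>finite S\<close> unfolding bnd_def by blast
  finally show "(\<Sum>x\<in>S. norm (a (fst x) (snd x)) * r' ^ (fst x + snd x)) \<le> B" .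
qed

lemma sum_inj_le:
  fixes g :: "'b \<Rightarrow> real"
  assumes "finite B" "inj_on h A" "h ` A \<subseteq> B" "\<And>y. y \<in> B \<Longrightarrow> 0 \<le> g y"
  shows "(\<Sum>x\<in>A. g (h x)) \<le> sum g B"
proof -
  have "(\<Sum>x\<in>A. g (h x)) = sum g (h ` A)" using assms(2) by (simp add: sum.reindex)
  also have "\<dots> \<le> sum g B" using assms(1,3,4) by (intro sum_mono2) auto
  finally show ?thesis .
qed

lemma finite_box: "finite (S::(nat\<times>nat) set) \<Longrightarrow> \<exists>N. S \<subseteq> {..N} \<times> {..N}"
proof -
  assume "finite S"
  then have "finite (fst ` S \<union> snd ` S)" by auto
  then obtain N where N: "\<And>x. x\<in>fst ` S \<union> snd ` S \<Longrightarrow> x \<le> N"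
    using finite_nat_set_iff_bounded_le by meson
  have "S \<subseteq> {..N} \<times> {..N}"
  proof
    fix x assume "x \<in> S" then show "x \<in> {..N} \<times> {..N}" using N[of "fst x"] N[of "snd x"] by (auto intro: imageI simp: mem_Times_iff)
  qed
  then show ?thesis by blast
qed

abbreviation wt :: "cps \<Rightarrow> real \<Rightarrow> nat \<times> nat \<Rightarrow> real" where
  "wt a r x \<equiv> norm (a (fst x) (snd x)) * r ^ (fst x + snd x)"

lemma bndD: "bnd a r B \<Longrightarrow> finite S \<Longrightarrow> sum (wt a r) S \<le> B"
  unfolding bnd_def by blast

lemma bnd_sub: assumes "bnd a r A" "bnd b r B" "r > 0" shows "bnd (ps_sub a b) r (A + B)"
  unfolding bnd_def
proof (intro allI impI)
  fix S :: "(nat\<times>nat) set" assume S: "finite S"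
  have "sum (wt (ps_sub a b) r) S \<le> sum (\<lambda>x. wt a r x + wt b r x) S"
    proof (rule sum_mono)
    fix x :: "nat \<times> nat"
    have "norm (a (fst x) (snd x) - b (fst x) (snd x)) * r ^ (fst x + snd x) \<le> (norm (a (fst x) (snd x)) + norm (b (fst x) (snd x))) * r ^ (fst x + snd x)"
      using \<open>r > 0\<close> by (intro mult_right_mono norm_triangle_ineq4) auto
    then show "wt (ps_sub a b) r x \<le> wt a r x + wt b r x" by (simp add: ps_sub_def distrib_right)
  qed
  also have "\<dots> \<le> A + B" using bndD[OF assms(1) S] bndD[OF assms(2) S] by (simp add: sum.distrib)
  finally show "sum (wt (ps_sub a b) r) S \<le> A + B" .
qed

lemma conv_sub: assumes "convergent_ps a" "convergent_ps b" shows "convergent_ps (ps_sub a b)"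
proof -
  obtain r1 A where "r1 > 0" "bnd a r1 A" using assms(1) conv_iff by blast
  obtain r2 B where "r2 > 0" "bnd b r2 B" using assms(2) conv_iff by blast
  define r where "r = min r1 r2"
  have "r > 0" "bnd a r A" "bnd b r B"
    using bnd_mono_r \<open>r1 > 0\<close> \<open>r2 > 0\<close> \<open>bnd a r1 A\<close> \<open>bnd b r2 B\<close> unfolding r_def by auto
  then show ?thesis using bnd_sub conv_iff by blast
qed


lemma bnd_mul: assumes "bnd a r A" "bnd b r B" "r > 0" shows "bnd (ps_mul a b) r (A * B)"
  unfolding bnd_def
proof (intro allI impI)
  fix S :: "(nat\<times>nat) set" assume S: "finite S"
  obtain N where N: "S \<subseteq> {..N} \<times> {..N}" using finite_box[OF S] by blast
  define Bx where "Bx = {..N} \<times> {..(N::nat)}"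
  define bx where "bx = (\<lambda>x::nat\<times>nat. {..fst x} \<times> {..snd x})"
  define h where "h = (\<lambda>z::(nat\<times>nat)\<times>(nat\<times>nat). (snd z, (fst (fst z) - fst (snd z), snd (fst z) - snd (snd z))))"
  have "sum (wt (ps_mul a b) r) S \<le> (\<Sum>x\<in>S. \<Sum>y\<in>bx x. wt a r y * wt b r (fst x - fst y, snd x - snd y))"
  proof (rule sum_mono)
    fix x assume "x \<in> S"
    have "wt (ps_mul a b) r x \<le> (\<Sum>y\<in>bx x. norm (a (fst y) (snd y) * b (fst x - fst y) (snd x - snd y))) * r ^ (fst x + snd x)"
      unfolding mul_prod bx_def using \<open>r > 0\<close> by (intro mult_right_mono[OF norm_sum]) simp
    also have "\<dots> = (\<Sum>y\<in>bx x. wt a r y * wt b r (fst x - fst y, snd x - snd y))"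
      unfolding sum_distrib_right
    proof (rule sum.cong[OF refl])
      fix y assume "y \<in> bx x"
      then have "fst x + snd x = (fst y + snd y) + ((fst x - fst y) + (snd x - snd y))" unfolding bx_def by auto
      then have e: "r ^ (fst x + snd x) = r ^ (fst y + snd y) * r ^ ((fst x - fst y) + (snd x - snd y))"
        by (metis power_add)
      show "norm (a (fst y) (snd y) * b (fst x - fst y) (snd x - snd y)) * r ^ (fst x + snd x) =
          wt a r y * wt b r (fst x - fst y, snd x - snd y)"
        unfolding e by (simp add: norm_mult mult_ac)
    qed
    finally show "wt (ps_mul a b) r x \<le> (\<Sum>y\<in>bx x. wt a r y * wt b r (fst x - fst y, snd x - snd y))" .
  qed
  also have "\<dots> = (\<Sum>z\<in>Sigma S bx. wt a r (snd z) * wt b r (fst (fst z) - fst (snd z), snd (fst z) - snd (snd z)))"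
    using S by (subst sum.Sigma) (auto simp: bx_def case_prod_beta)
  also have "\<dots> = (\<Sum>z\<in>Sigma S bx. (\<lambda>u. wt a r (fst u) * wt b r (snd u)) (h z))"
    by (simp add: h_def)
  also have "\<dots> \<le> (\<Sum>u\<in>Bx \<times> Bx. wt a r (fst u) * wt b r (snd u))"
  proof (rule sum_inj_le)
    show "finite (Bx \<times> Bx)" by (simp add: Bx_def)
    show "inj_on h (Sigma S bx)"
      unfolding inj_on_def h_def bx_def by (auto simp: prod_eq_iff)
    show "h ` Sigma S bx \<subseteq> Bx \<times> Bx"
      unfolding h_def bx_def Bx_def using N by auto
    show "\<And>y. y \<in> Bx \<times> Bx \<Longrightarrow> 0 \<le> wt a r (fst y) * wt b r (snd y)" using \<open>r > 0\<close> by auto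
  qed
  also have "\<dots> = sum (wt a r) Bx * sum (wt b r) Bx"
    by (simp add: sum_product sum.cartesian_product case_prod_beta)
  also have "\<dots> \<le> A * B"
    using bndD[OF assms(1)] bndD[OF assms(2)] bnd_nonneg[OF assms(1)] \<open>r > 0\<close> by (intro mult_mono) (auto simp: Bx_def intro!: sum_nonneg)
  finally show "sum (wt (ps_mul a b) r) S \<le> A * B" .
qed



lemma conv_mul: assumes "convergent_ps a" "convergent_ps b" shows "convergent_ps (ps_mul a b)"
proof -
  obtain r1 A where "r1 > 0" "bnd a r1 A" using assms(1) conv_iff by blast
  obtain r2 B where "r2 > 0" "bnd b r2 B" using assms(2) conv_iff by blast
  define r where "r = min r1 r2"
  have "r > 0" "bnd a r A" "bnd b r B"
    using bnd_mono_r \<open>r1 > 0\<close> \<open>r2 > 0\<close> \<open>bnd a r1 A\<close> \<open>bnd b r2 B\<close> unfolding r_def by auto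
  then show ?thesis using bnd_mul conv_iff by blast
qed

lemma suc_le_pow2: "Suc i \<le> 2 ^ i"
  by (induction i) auto

lemma pow_half_bound:
  assumes "r > 0" "k \<le> m" shows "real (Suc k) * (r/2) ^ m \<le> r ^ m"
proof -
  have "real (Suc k) \<le> 2 ^ m"
  proof -
    have "Suc k \<le> 2 ^ k" by (rule suc_le_pow2)
    also have "(2::nat) ^ k \<le> 2 ^ m" using assms(2) by (simp add: power_increasing)
    finally show ?thesis by (metis of_nat_le_iff of_nat_numeral of_nat_power)
  qed
  then have "real (Suc k) * (r/2) ^ m \<le> 2 ^ m * (r/2) ^ m"
    using assms by (intro mult_right_mono) auto
  also have "\<dots> = r ^ m" by (simp add: power_divide)
  finally show ?thesis .
qed

lemma bnd_dX: assumes "bnd a r B" "r > 0" shows "bnd (ps_dX a) (r/2) (B / r)"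
  unfolding bnd_def
proof (intro allI impI)
  fix S :: "(nat\<times>nat) set" assume S: "finite S"
  define h where "h = (\<lambda>x::nat\<times>nat. (Suc (fst x), snd x))"
  have "sum (wt (ps_dX a) (r/2)) S \<le> (\<Sum>x\<in>S. (\<lambda>y. wt a r y / r) (h x))"
  proof (rule sum_mono)
    fix x :: "nat\<times>nat"
    have "wt (ps_dX a) (r/2) x = norm (a (Suc (fst x)) (snd x)) * (real (Suc (fst x)) * (r/2) ^ (fst x + snd x))"
      by (simp add: ps_dX_def norm_mult del: of_nat_Suc)
    also have "\<dots> \<le> norm (a (Suc (fst x)) (snd x)) * r ^ (fst x + snd x)"
      using assms(2) by (intro mult_left_mono pow_half_bound) auto
    also have "\<dots> = wt a r (h x) / r" using assms(2) by (simp add: h_def)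
    finally show "wt (ps_dX a) (r/2) x \<le> (\<lambda>y. wt a r y / r) (h x)" .
  qed
  also have "\<dots> \<le> sum (\<lambda>y. wt a r y / r) (h ` S)"
    by (rule sum_inj_le) (use S assms(2) in \<open>auto simp: h_def inj_on_def prod_eq_iff\<close>)
  also have "\<dots> = sum (wt a r) (h ` S) / r" by (simp add: sum_divide_distrib)
  also have "\<dots> \<le> B / r" using bndD[OF assms(1)] S assms(2) by (intro divide_right_mono) auto
  finally show "sum (wt (ps_dX a) (r/2)) S \<le> B / r" .
qed

lemma bnd_dY: assumes "bnd a r B" "r > 0" shows "bnd (ps_dY a) (r/2) (B / r)"
  unfolding bnd_def
proof (intro allI impI)
  fix S :: "(nat\<times>nat) set" assume S: "finite S"
  define h where "h = (\<lambda>x::nat\<times>nat. (fst x, Suc (snd x)))"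
  have "sum (wt (ps_dY a) (r/2)) S \<le> (\<Sum>x\<in>S. (\<lambda>y. wt a r y / r) (h x))"
  proof (rule sum_mono)
    fix x :: "nat\<times>nat"
    have "wt (ps_dY a) (r/2) x = norm (a (fst x) (Suc (snd x))) * (real (Suc (snd x)) * (r/2) ^ (snd x + fst x))"
      by (simp add: ps_dY_def norm_mult add.commute del: of_nat_Suc)
    also have "\<dots> \<le> norm (a (fst x) (Suc (snd x))) * r ^ (snd x + fst x)"
      using assms(2) by (intro mult_left_mono pow_half_bound) auto
    also have "\<dots> = wt a r (h x) / r" using assms(2) by (simp add: h_def add.commute)
    finally show "wt (ps_dY a) (r/2) x \<le> (\<lambda>y. wt a r y / r) (h x)" .
  qed
  also have "\<dots> \<le> sum (\<lambda>y. wt a r y / r) (h ` S)"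
    by (rule sum_inj_le) (use S assms(2) in \<open>auto simp: h_def inj_on_def prod_eq_iff\<close>)
  also have "\<dots> = sum (wt a r) (h ` S) / r" by (simp add: sum_divide_distrib)
  also have "\<dots> \<le> B / r" using bndD[OF assms(1)] S assms(2) by (intro divide_right_mono) auto
  finally show "sum (wt (ps_dY a) (r/2)) S \<le> B / r" .
qed

lemma conv_dX: "convergent_ps a \<Longrightarrow> convergent_ps (ps_dX a)"
  by (metis bnd_dX conv_iff half_gt_zero)

lemma conv_dY: "convergent_ps a \<Longrightarrow> convergent_ps (ps_dY a)"
  by (metis bnd_dY conv_iff half_gt_zero)

lemma conv_jac: "convergent_ps f \<Longrightarrow> convergent_ps l \<Longrightarrow> convergent_ps (ps_jac f l)"
  unfolding ps_jac_def by (intro conv_sub conv_mul conv_dX conv_dY)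

definition ps_neg :: "cps \<Rightarrow> cps" where "ps_neg a = (\<lambda>i j. - a i j)"

lemma conv_neg: "convergent_ps a \<Longrightarrow> convergent_ps (ps_neg a)"
  unfolding convergent_ps_def ps_neg_def by simp

definition sw :: "cps \<Rightarrow> cps" where "sw a = (\<lambda>i j. a j i)"

lemma conv_sw: assumes "convergent_ps a" shows "convergent_ps (sw a)"
proof -
  obtain r B where r: "r > 0" "bnd a r B" using assms conv_iff by blast
  have "bnd (sw a) r B" unfolding bnd_def
  proof (intro allI impI)
    fix S :: "(nat\<times>nat) set" assume S: "finite S"
    have "sum (wt (sw a) r) S = (\<Sum>x\<in>S. wt a r (prod.swap x))" by (simp add: sw_def add.commute)
    also have "\<dots> \<le> sum (wt a r) (prod.swap ` S)"
      by (rule sum_inj_le) (use S r in auto)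
    also have "\<dots> \<le> B" using bndD[OF r(2)] S by auto
    finally show "sum (wt (sw a) r) S \<le> B" .
  qed
  then show ?thesis using r conv_iff by blast
qed

lemma sw_sw[simp]: "sw (sw a) = a" by (simp add: sw_def)

lemma sw_mul: "sw (ps_mul a b) = ps_mul (sw a) (sw b)"
  unfolding sw_def ps_mul_def by (intro ext) (rule sum.swap)

lemma sw_dX: "ps_dX (sw a) = sw (ps_dY a)"
  by (simp add: sw_def ps_dX_def ps_dY_def)

lemma sw_dY: "ps_dY (sw a) = sw (ps_dX a)"
  by (simp add: sw_def ps_dX_def ps_dY_def)

lemma sw_jac: "ps_jac (sw f) (sw l) = sw (ps_neg (ps_jac f l))"
  by (simp add: ps_jac_def sw_dX sw_dY sw_mul[symmetric]) (simp add: sw_def ps_neg_def ps_sub_def)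

lemma dvd_sw: assumes "ps_dvd l f" shows "ps_dvd (sw l) (sw f)"
proof -
  obtain h where "convergent_ps h" "f = ps_mul l h" using assms ps_dvd_def by blast
  then show ?thesis unfolding ps_dvd_def using conv_sw sw_mul by metis
qed

lemma dvd_neg: assumes "ps_dvd l f" shows "ps_dvd l (ps_neg f)"
proof -
  obtain h where "convergent_ps h" "f = ps_mul l h" using assms ps_dvd_def by blast
  moreover have "ps_neg (ps_mul l h) = ps_mul l (ps_neg h)"
    by (simp add: ps_neg_def ps_mul_def sum_negf)
  ultimately show ?thesis unfolding ps_dvd_def using conv_neg by metis
qed

lemma neg_neg[simp]: "ps_neg (ps_neg a) = a" by (simp add: ps_neg_def)



definition E :: "nat \<Rightarrow> nat \<Rightarrow> (nat\<times>nat) set" where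
  "E i j = ({..i} \<times> {..Suc j}) - {(0,0),(0,1)}"

lemma E_dec: "x \<in> E i j \<Longrightarrow> (i - fst x) + (Suc j - snd x) < i + j \<or>
   ((i - fst x) + (Suc j - snd x) = i + j \<and> i - fst x < i)"
proof -
  assume "x \<in> E i j"
  then have h: "fst x \<le> i" "snd x \<le> Suc j" "\<not> (fst x = 0 \<and> snd x = 0)" "\<not> (fst x = 0 \<and> snd x = 1)"
    unfolding E_def by (auto simp: prod_eq_iff)
  then show ?thesis by linarith
qed
function qr :: "cps \<Rightarrow> cps \<Rightarrow> nat \<Rightarrow> nat \<Rightarrow> complex" where
  "qr f l i j = (f i (Suc j) - (\<Sum>x\<in>E i j. l (fst x) (snd x) * qr f l (i - fst x) (Suc j - snd x))) / l 0 1"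
  by auto
termination
  by (relation "measures [\<lambda>(f,l,i,j). i+j, \<lambda>(f,l,i,j). i]") (auto dest!: E_dec)

declare qr.simps[simp del]


lemma qr_eq: assumes "l 0 0 = 0" "l 0 1 \<noteq> 0"
  shows "ps_mul l (qr f l) i (Suc j) = f i (Suc j)"
proof -
  define g where "g = (\<lambda>x. l (fst x) (snd x) * qr f l (i - fst x) (Suc j - snd x))"
  have fin: "finite ({..i} \<times> {..Suc j})" by simp
  have "ps_mul l (qr f l) i (Suc j) = sum g ({..i} \<times> {..Suc j})"
    unfolding g_def by (rule mul_prod)
  also have "\<dots> = g (0,1) + sum g (({..i} \<times> {..Suc j}) - {(0,1)})"
    using fin by (rule sum.remove) simp
  also have "sum g (({..i} \<times> {..Suc j}) - {(0,1)}) = sum g (insert (0,0) (E i j))"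
  proof -
    have "({..i} \<times> {..Suc j}) - {(0,1)} = insert (0,0) (E i j)" unfolding E_def by auto
    then show ?thesis by simp
  qed
  also have "\<dots> = g (0,0) + sum g (E i j)"
    by (rule sum.insert) (auto simp: E_def)
  also have "g (0,0) = 0" unfolding g_def using assms(1) by simp
  also have "g (0,1) = l 0 1 * qr f l i j" unfolding g_def by simp
  also have "l 0 1 * qr f l i j = f i (Suc j) - sum g (E i j)"
    using assms(2) unfolding g_def by (subst qr.simps) simp
  finally show ?thesis by simp
qed


definition Tr :: "nat \<Rightarrow> (nat\<times>nat) set" where "Tr n = {x. fst x + snd x \<le> n}"

lemma Tr_finite: "finite (Tr n)"
proof -
  have "Tr n \<subseteq> {..n} \<times> {..n}" unfolding Tr_def by auto
  then show ?thesis by (rule finite_subset) simp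
qed

lemma qr_point:
  fixes \<rho> \<sigma> :: real
  assumes "\<rho> > 0" "\<sigma> > 0" "l 0 1 \<noteq> 0"
  shows "norm (l 0 1) * \<sigma> * (norm (qr f l i j) * \<rho>^i * \<sigma>^j) \<le>
     norm (f i (Suc j)) * \<rho>^i * \<sigma>^(Suc j) +
     (\<Sum>y\<in>E i j. (norm (l (fst y) (snd y)) * \<rho>^(fst y) * \<sigma>^(snd y)) *
        (norm (qr f l (i - fst y) (Suc j - snd y)) * \<rho>^(i - fst y) * \<sigma>^(Suc j - snd y)))"
proof -
  define s where "s = (\<Sum>y\<in>E i j. l (fst y) (snd y) * qr f l (i - fst y) (Suc j - snd y))"
  have q: "l 0 1 * qr f l i j = f i (Suc j) - s"
    using assms(3) unfolding s_def by (subst qr.simps) simp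
  have "norm (l 0 1) * norm (qr f l i j) = norm (f i (Suc j) - s)" using q by (metis norm_mult)
  also have "\<dots> \<le> norm (f i (Suc j)) + norm s" by (rule norm_triangle_ineq4)
  also have "norm s \<le> (\<Sum>y\<in>E i j. norm (l (fst y) (snd y)) * norm (qr f l (i - fst y) (Suc j - snd y)))"
    unfolding s_def by (rule order_trans[OF norm_sum]) (simp add: norm_mult)
  finally have ineq: "norm (l 0 1) * norm (qr f l i j) \<le> norm (f i (Suc j)) +
      (\<Sum>y\<in>E i j. norm (l (fst y) (snd y)) * norm (qr f l (i - fst y) (Suc j - snd y)))" by simp
  have w: "\<rho>^i * \<sigma>^(Suc j) \<ge> 0" using assms by simp
  have "norm (l 0 1) * \<sigma> * (norm (qr f l i j) * \<rho>^i * \<sigma>^j) = (norm (l 0 1) * norm (qr f l i j)) * (\<rho>^i * \<sigma>^(Suc j))"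
    by (simp add: algebra_simps)
  also have "\<dots> \<le> (norm (f i (Suc j)) +
      (\<Sum>y\<in>E i j. norm (l (fst y) (snd y)) * norm (qr f l (i - fst y) (Suc j - snd y)))) * (\<rho>^i * \<sigma>^(Suc j))"
    by (rule mult_right_mono[OF ineq w])
  also have "\<dots> = norm (f i (Suc j)) * \<rho>^i * \<sigma>^(Suc j) +
      (\<Sum>y\<in>E i j. (norm (l (fst y) (snd y)) * norm (qr f l (i - fst y) (Suc j - snd y))) * (\<rho>^i * \<sigma>^(Suc j)))"
    by (simp add: distrib_right sum_distrib_right mult.assoc)
  also have "(\<Sum>y\<in>E i j. (norm (l (fst y) (snd y)) * norm (qr f l (i - fst y) (Suc j - snd y))) * (\<rho>^i * \<sigma>^(Suc j))) =
     (\<Sum>y\<in>E i j. (norm (l (fst y) (snd y)) * \<rho>^(fst y) * \<sigma>^(snd y)) *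
        (norm (qr f l (i - fst y) (Suc j - snd y)) * \<rho>^(i - fst y) * \<sigma>^(Suc j - snd y)))"
  proof (rule sum.cong[OF refl])
    fix y assume "y \<in> E i j"
    then have le: "fst y \<le> i" "snd y \<le> Suc j" unfolding E_def by auto
    have e1: "\<rho>^i = \<rho>^(fst y) * \<rho>^(i - fst y)" using le(1) by (metis le_add_diff_inverse power_add)
    have e2: "\<sigma>^(Suc j) = \<sigma>^(snd y) * \<sigma>^(Suc j - snd y)" using le(2) by (metis le_add_diff_inverse power_add)
    show "(norm (l (fst y) (snd y)) * norm (qr f l (i - fst y) (Suc j - snd y))) * (\<rho>^i * \<sigma>^(Suc j)) =
      (norm (l (fst y) (snd y)) * \<rho>^(fst y) * \<sigma>^(snd y)) *
        (norm (qr f l (i - fst y) (Suc j - snd y)) * \<rho>^(i - fst y) * \<sigma>^(Suc j - snd y))"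
      unfolding e1 e2 by (simp only: mult_ac)
  qed
  finally show ?thesis .
qed



lemma qr_est:
  fixes \<rho> \<sigma> Bf :: real
  assumes pos: "\<rho> > 0" "\<sigma> > 0" and l01: "l 0 1 \<noteq> 0"
    and HF: "\<And>S. finite S \<Longrightarrow> (\<Sum>x\<in>S. norm (f (fst x) (Suc (snd x))) * \<rho>^(fst x) * \<sigma>^(Suc (snd x))) \<le> Bf"
    and HA: "\<And>P. finite P \<Longrightarrow> P \<inter> {(0,0),(0,1)} = {} \<Longrightarrow>
       (\<Sum>y\<in>P. norm (l (fst y) (snd y)) * \<rho>^(fst y) * \<sigma>^(snd y)) \<le> norm (l 0 1) * \<sigma> / 2"
  shows "(\<Sum>x\<in>Tr n. norm (qr f l (fst x) (snd x)) * \<rho>^(fst x) * \<sigma>^(snd x)) \<le> 2 * Bf / (norm (l 0 1) * \<sigma>)"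
proof -
  define Qw where "Qw = (\<lambda>x::nat\<times>nat. norm (qr f l (fst x) (snd x)) * \<rho>^(fst x) * \<sigma>^(snd x))"
  define A where "A = (\<lambda>y::nat\<times>nat. norm (l (fst y) (snd y)) * \<rho>^(fst y) * \<sigma>^(snd y))"
  define Fw where "Fw = (\<lambda>x::nat\<times>nat. norm (f (fst x) (Suc (snd x))) * \<rho>^(fst x) * \<sigma>^(Suc (snd x)))"
  define b where "b = norm (l 0 1)"
  define S where "S = sum Qw (Tr n)"
  define P where "P = ({..n} \<times> {..Suc n}) - {(0,0),(0::nat,1::nat)}"
  define h where "h = (\<lambda>u::(nat\<times>nat)\<times>(nat\<times>nat). (snd u, (fst (fst u) - fst (snd u), Suc (snd (fst u)) - snd (snd u))))"
  have bpos: "b > 0" using l01 unfolding b_def by simp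
  have Qnn: "Qw x \<ge> 0" for x using pos unfolding Qw_def by simp
  have Ann: "A x \<ge> 0" for x using pos unfolding A_def by simp
  have "b * \<sigma> * S = (\<Sum>x\<in>Tr n. b * \<sigma> * Qw x)" unfolding S_def by (simp add: sum_distrib_left)
  also have "\<dots> \<le> (\<Sum>x\<in>Tr n. Fw x + (\<Sum>y\<in>E (fst x) (snd x). A y * Qw (fst x - fst y, Suc (snd x) - snd y)))"
  proof (rule sum_mono)
    fix x assume "x \<in> Tr n"
    show "b * \<sigma> * Qw x \<le> Fw x + (\<Sum>y\<in>E (fst x) (snd x). A y * Qw (fst x - fst y, Suc (snd x) - snd y))"
      using qr_point[of \<rho> \<sigma> l f "fst x" "snd x"] pos l01 unfolding b_def Qw_def A_def Fw_def by simp
  qed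
  also have "\<dots> = sum Fw (Tr n) + (\<Sum>x\<in>Tr n. \<Sum>y\<in>E (fst x) (snd x). A y * Qw (fst x - fst y, Suc (snd x) - snd y))"
    by (rule sum.distrib)
  also have "sum Fw (Tr n) \<le> Bf" unfolding Fw_def by (rule HF[OF Tr_finite])
  also have "(\<Sum>x\<in>Tr n. \<Sum>y\<in>E (fst x) (snd x). A y * Qw (fst x - fst y, Suc (snd x) - snd y))
      = (\<Sum>u\<in>Sigma (Tr n) (\<lambda>x. E (fst x) (snd x)). (\<lambda>v. A (fst v) * Qw (snd v)) (h u))"
    unfolding h_def by (subst sum.Sigma) (auto simp: Tr_finite E_def case_prod_beta)
  also have "\<dots> \<le> (\<Sum>v\<in>P \<times> Tr n. A (fst v) * Qw (snd v))"
  proof (rule sum_inj_le)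
    show "finite (P \<times> Tr n)" unfolding P_def by (simp add: Tr_finite)
    show "inj_on h (Sigma (Tr n) (\<lambda>x. E (fst x) (snd x)))"
    proof (rule inj_onI)
      fix u v assume u: "u \<in> Sigma (Tr n) (\<lambda>x. E (fst x) (snd x))" and v: "v \<in> Sigma (Tr n) (\<lambda>x. E (fst x) (snd x))"
        and e: "h u = h v"
      from u have u1: "fst (snd u) \<le> fst (fst u)" "snd (snd u) \<le> Suc (snd (fst u))" unfolding E_def by auto
      from v have v1: "fst (snd v) \<le> fst (fst v)" "snd (snd v) \<le> Suc (snd (fst v))" unfolding E_def by auto
      from e have e1: "snd u = snd v" "fst (fst u) - fst (snd u) = fst (fst v) - fst (snd v)"
        "Suc (snd (fst u)) - snd (snd u) = Suc (snd (fst v)) - snd (snd v)" unfolding h_def by auto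
      have e2: "fst (snd u) = fst (snd v)" "snd (snd u) = snd (snd v)" using e1(1) by auto
      have "fst (fst u) = fst (fst v)" using u1 v1 e1 e2 by linarith
      moreover have "snd (fst u) = snd (fst v)" using u1 v1 e1 e2 by linarith
      ultimately show "u = v" using e1(1) by (simp add: prod_eq_iff)
    qed
    show "h ` Sigma (Tr n) (\<lambda>x. E (fst x) (snd x)) \<subseteq> P \<times> Tr n"
    proof
      fix w assume "w \<in> h ` Sigma (Tr n) (\<lambda>x. E (fst x) (snd x))"
      then obtain u where u: "u \<in> Sigma (Tr n) (\<lambda>x. E (fst x) (snd x))" and w: "w = h u" by blast
      from u have t: "fst (fst u) + snd (fst u) \<le> n" and y: "snd u \<in> E (fst (fst u)) (snd (fst u))"
        unfolding Tr_def by auto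
      have "fst (snd u) \<le> fst (fst u)" "snd (snd u) \<le> Suc (snd (fst u))" "snd u \<notin> {(0,0),(0,1)}"
        using y unfolding E_def by auto
      then have "snd u \<in> P" unfolding P_def using t by (auto simp: mem_Times_iff)
      moreover have "(fst (fst u) - fst (snd u)) + (Suc (snd (fst u)) - snd (snd u)) \<le> n"
        using E_dec[OF y] t by linarith
      ultimately show "w \<in> P \<times> Tr n" unfolding w h_def Tr_def by simp
    qed
    show "\<And>y. y \<in> P \<times> Tr n \<Longrightarrow> 0 \<le> A (fst y) * Qw (snd y)" using Ann Qnn by simp
  qed
  also have "\<dots> = sum A P * S" unfolding S_def
    by (simp add: sum_product sum.cartesian_product case_prod_beta)
  also have "sum A P \<le> b * \<sigma> / 2" unfolding A_def b_def
    by (rule HA) (auto simp: P_def)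
  finally have "b * \<sigma> * S \<le> Bf + b * \<sigma> / 2 * S"
    using Qnn S_def by (simp add: mult_right_mono sum_nonneg)
  then have "b * \<sigma> * S \<le> 2 * Bf" by simp
  then have "S \<le> 2 * Bf / (b * \<sigma>)" using bpos pos by (simp add: field_simps)
  then show ?thesis unfolding S_def Qw_def b_def .
qed



lemma pow_small: fixes t r :: real assumes "0 < t" "t \<le> r" "2 \<le> k" shows "t ^ k \<le> r ^ k * (t / r) ^ 2"
proof -
  have r: "r > 0" using assms by linarith
  have "t ^ k = r ^ k * (t / r) ^ k" using r by (simp add: power_divide)
  also have "(t / r) ^ k \<le> (t / r) ^ 2" using assms r by (intro power_decreasing) auto
  then have "r ^ k * (t / r) ^ k \<le> r ^ k * (t / r) ^ 2" using r by (intro mult_left_mono) auto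
  finally show ?thesis .
qed

lemma qr_conv:
  assumes "convergent_ps f" "convergent_ps l" "l 0 0 = 0" "l 0 1 \<noteq> 0"
  shows "convergent_ps (qr f l)"
proof -
  obtain r1 Bf where "r1 > 0" "bnd f r1 Bf" using assms(1) conv_iff by blast
  obtain r2 Bl where "r2 > 0" "bnd l r2 Bl" using assms(2) conv_iff by blast
  define r where "r = min r1 r2"
  have r: "r > 0" and bf: "bnd f r Bf" and bl: "bnd l r Bl"
    using bnd_mono_r \<open>r1 > 0\<close> \<open>r2 > 0\<close> \<open>bnd f r1 Bf\<close> \<open>bnd l r2 Bl\<close> unfolding r_def by auto
  have Bl0: "Bl \<ge> 0" using bnd_nonneg[OF bl] .
  define b where "b = norm (l 0 1)"
  define a where "a = norm (l 1 0)"
  have b: "b > 0" using assms(4) unfolding b_def by simp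
  have a: "a \<ge> 0" unfolding a_def by simp
  define t where "t = min r (b * r^2 / (4 * (Bl + 1)))"
  define c where "c = min 1 (b / (4 * (a + 1)))"
  define \<rho> where "\<rho> = c * t"
  have t: "t > 0" "t \<le> r" "t \<le> b * r^2 / (4 * (Bl + 1))" unfolding t_def using r b Bl0 by auto
  have c: "c > 0" "c \<le> 1" "c \<le> b / (4 * (a + 1))" unfolding c_def using a b by auto
  have \<rho>: "\<rho> > 0" "\<rho> \<le> t" unfolding \<rho>_def using t c by (auto simp: mult_le_cancel_right1)
  have HF: "(\<Sum>x\<in>S. norm (f (fst x) (Suc (snd x))) * \<rho>^(fst x) * t^(Suc (snd x))) \<le> Bf" if S: "finite S" for S
  proof -
    define h where "h = (\<lambda>x::nat\<times>nat. (fst x, Suc (snd x)))"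
    have "(\<Sum>x\<in>S. norm (f (fst x) (Suc (snd x))) * \<rho>^(fst x) * t^(Suc (snd x))) \<le> (\<Sum>x\<in>S. wt f r (h x))"
    proof (rule sum_mono)
      fix x :: "nat \<times> nat"
      have "\<rho>^(fst x) * t^(Suc (snd x)) \<le> r^(fst x) * r^(Suc (snd x))"
        using \<rho> t by (intro mult_mono power_mono) auto
      then have i: "norm (f (fst x) (Suc (snd x))) * (\<rho>^(fst x) * t^(Suc (snd x))) \<le> norm (f (fst x) (Suc (snd x))) * (r^(fst x) * r^(Suc (snd x)))"
        by (rule mult_left_mono) simp
      have e: "wt f r (h x) = norm (f (fst x) (Suc (snd x))) * (r^(fst x) * r^(Suc (snd x)))"
        unfolding h_def by (simp add: power_add[symmetric])
      show "norm (f (fst x) (Suc (snd x))) * \<rho>^(fst x) * t^(Suc (snd x)) \<le> wt f r (h x)"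
        unfolding e using i by (simp only: mult.assoc)
    qed
    also have "\<dots> \<le> sum (wt f r) (h ` S)"
      by (rule sum_inj_le) (use S r in \<open>auto simp: h_def inj_on_def prod_eq_iff\<close>)
    also have "\<dots> \<le> Bf" using bndD[OF bf] S by simp
    finally show ?thesis .
  qed
  have HA: "(\<Sum>y\<in>P. norm (l (fst y) (snd y)) * \<rho>^(fst y) * t^(snd y)) \<le> norm (l 0 1) * t / 2"
    if P: "finite P" "P \<inter> {(0,0),(0,1)} = {}" for P
  proof -
    define A where "A = (\<lambda>y::nat\<times>nat. norm (l (fst y) (snd y)) * \<rho>^(fst y) * t^(snd y))"
    have Ann: "A y \<ge> 0" for y unfolding A_def using \<rho> t by simp
    have "sum A P \<le> sum A (insert (1,0) P)" using P Ann by (intro sum_mono2) auto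
    also have "\<dots> = A (1,0) + sum A (P - {(1,0)})" using P by (simp add: sum.insert_remove)
    also have "A (1,0) \<le> b * t / 4"
    proof -
      have "a * c \<le> a * (b / (4 * (a + 1)))" using a c by (intro mult_left_mono) auto
      also have "\<dots> \<le> b / 4" using a b by (simp add: field_simps)
      finally have "a * c * t \<le> b / 4 * t" using t by (intro mult_right_mono) auto
      then show ?thesis unfolding A_def a_def \<rho>_def by (simp add: mult.assoc)
    qed
    also have "sum A (P - {(1,0)}) \<le> (\<Sum>y\<in>P - {(1,0)}. wt l r y * (t / r)^2)"
    proof (rule sum_mono)
      fix y assume y: "y \<in> P - {(1,0)}"
      then have "y \<noteq> (0,0)" "y \<noteq> (0,1)" "y \<noteq> (1,0)" using P(2) by auto
      then have "\<not> (fst y = 0 \<and> snd y = 0)" "\<not> (fst y = 0 \<and> snd y = 1)" "\<not> (fst y = 1 \<and> snd y = 0)"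
        by (auto simp: prod_eq_iff)
      then have k: "2 \<le> fst y + snd y" by presburger
      have "\<rho>^(fst y) * t^(snd y) \<le> t^(fst y) * t^(snd y)" using \<rho> t by (intro mult_right_mono power_mono) auto
      also have "\<dots> = t ^ (fst y + snd y)" by (simp add: power_add)
      also have "\<dots> \<le> r ^ (fst y + snd y) * (t / r)^2" by (rule pow_small[OF t(1) t(2) k])
      finally have "norm (l (fst y) (snd y)) * (\<rho>^(fst y) * t^(snd y)) \<le> norm (l (fst y) (snd y)) * (r ^ (fst y + snd y) * (t / r)^2)"
        by (intro mult_left_mono) auto
      then show "A y \<le> wt l r y * (t / r)^2" unfolding A_def by (simp add: mult.assoc)
    qed
    also have "\<dots> = sum (wt l r) (P - {(1,0)}) * (t / r)^2" by (simp add: sum_distrib_right)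
    also have "\<dots> \<le> Bl * (t / r)^2" using bndD[OF bl] P by (intro mult_right_mono) auto
    also have "\<dots> \<le> b * t / 4"
    proof -
      have "Bl * (t / r)^2 = t * (t * Bl) / r^2" by (simp add: power2_eq_square field_simps)
      also have "t * Bl \<le> t * (Bl + 1)" using t by simp
      also have "\<dots> \<le> (b * r^2 / (4 * (Bl + 1))) * (Bl + 1)" using t Bl0 by (intro mult_right_mono) auto
      also have "\<dots> = b * r^2 / 4" using Bl0 by (simp add: field_simps)
      finally have "Bl * (t / r)^2 \<le> t * (b * r^2 / 4) / r^2"
        using t r by (simp add: divide_right_mono mult_left_mono)
      also have "\<dots> = b * t / 4" using r by simp
      finally show ?thesis .
    qed
    finally have "sum A P \<le> b * t / 4 + b * t / 4" by simp
    then show ?thesis unfolding A_def b_def by (simp add: mult.commute)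
  qed
  define K where "K = 2 * Bf / (norm (l 0 1) * t)"
  have est: "(\<Sum>x\<in>Tr n. norm (qr f l (fst x) (snd x)) * \<rho>^(fst x) * t^(snd x)) \<le> K" for n
    unfolding K_def by (rule qr_est[OF \<rho>(1) t(1) assms(4) HF HA])
  have "bnd (qr f l) \<rho> K" unfolding bnd_def
  proof (intro allI impI)
    fix S :: "(nat\<times>nat) set" assume S: "finite S"
    obtain N where N: "S \<subseteq> {..N} \<times> {..N}" using finite_box[OF S] by blast
    have sub: "S \<subseteq> Tr (N + N)" using N unfolding Tr_def by auto
    have "sum (wt (qr f l) \<rho>) S \<le> (\<Sum>x\<in>S. norm (qr f l (fst x) (snd x)) * \<rho>^(fst x) * t^(snd x))"
    proof (rule sum_mono)
      fix x :: "nat\<times>nat"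
      have "\<rho>^(fst x + snd x) \<le> \<rho>^(fst x) * t^(snd x)"
        using \<rho> by (simp add: power_add mult_left_mono power_mono)
      then show "wt (qr f l) \<rho> x \<le> norm (qr f l (fst x) (snd x)) * \<rho>^(fst x) * t^(snd x)"
        by (simp add: mult.assoc mult_left_mono)
    qed
    also have "\<dots> \<le> (\<Sum>x\<in>Tr (N + N). norm (qr f l (fst x) (snd x)) * \<rho>^(fst x) * t^(snd x))"
      using \<rho> t sub by (intro sum_mono2 Tr_finite) auto
    also have "\<dots> \<le> K" by (rule est)
    finally show "sum (wt (qr f l) \<rho>) S \<le> K" .
  qed
  then show ?thesis using \<rho>(1) conv_iff by blast
qed





definition toF :: "cps \<Rightarrow> complex fps fps" where
  "toF a = Abs_fps (\<lambda>i. Abs_fps (\<lambda>j. a i j))"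

lemma toF_nth[simp]: "toF a $ i $ j = a i j"
  by (simp add: toF_def)

lemma toF_inj: "toF a = toF b \<Longrightarrow> a = b"
proof (intro ext)
  fix i j assume "toF a = toF b"
  then have "toF a $ i $ j = toF b $ i $ j" by simp
  then show "a i j = b i j" by simp
qed

lemma toF_mul: "toF (ps_mul a b) = toF a * toF b"
proof (rule fps_ext, rule fps_ext)
  fix i j
  have "(toF a * toF b) $ i $ j = (\<Sum>p=0..i. (toF a $ p * toF b $ (i - p)) $ j)"
    by (simp add: fps_mult_nth fps_sum_nth)
  also have "\<dots> = (\<Sum>p=0..i. \<Sum>q=0..j. a p q * b (i - p) (j - q))"
    by (simp add: fps_mult_nth)
  finally show "toF (ps_mul a b) $ i $ j = (toF a * toF b) $ i $ j"
    by (simp add: ps_mul_def atLeast0AtMost)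
qed

lemma toF_sub: "toF (ps_sub a b) = toF a - toF b"
  by (rule fps_ext, rule fps_ext) (simp add: ps_sub_def)

lemma toF_zero: "toF ps_zero = 0"
  by (rule fps_ext, rule fps_ext) (simp add: ps_zero_def)

definition DY :: "complex fps fps \<Rightarrow> complex fps fps" where
  "DY F = Abs_fps (\<lambda>i. fps_deriv (F $ i))"

lemma DY_nth[simp]: "DY F $ i = fps_deriv (F $ i)"
  by (simp add: DY_def)

lemma toF_dX: "toF (ps_dX a) = fps_deriv (toF a)"
  by (rule fps_ext, rule fps_ext) (simp add: ps_dX_def fps_of_nat[symmetric] del: of_nat_Suc)

lemma toF_dY: "toF (ps_dY a) = DY (toF a)"
  by (rule fps_ext, rule fps_ext) (simp add: ps_dY_def)

lemma DY_mult: "DY (F * G) = DY F * G + F * DY G"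
proof (rule fps_ext)
  fix n
  show "DY (F * G) $ n = (DY F * G + F * DY G) $ n"
    by (simp add: fps_mult_nth fps_deriv_sum sum.distrib)
qed

lemma DY_diff: "DY (F - G) = DY F - DY G"
  by (rule fps_ext) simp

lemma toF_jac: "toF (ps_jac f l) = fps_deriv (toF f) * DY (toF l) - DY (toF f) * fps_deriv (toF l)"
  by (simp add: ps_jac_def toF_sub toF_mul toF_dX toF_dY)

lemma jac_mul_l: "ps_jac (ps_mul l h) l = ps_mul l (ps_jac h l)"
proof (rule toF_inj)
  show "toF (ps_jac (ps_mul l h) l) = toF (ps_mul l (ps_jac h l))"
    by (simp add: toF_jac toF_mul DY_mult algebra_simps)
qed



lemma ord1: assumes "ps_ord l = 1" shows "l 0 1 \<noteq> 0 \<or> l 1 0 \<noteq> 0"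
proof -
  have nz: "l \<noteq> ps_zero" using assms unfolding ps_ord_def by auto
  then have L: "(LEAST n. \<exists>i j. i + j = n \<and> l i j \<noteq> 0) = 1"
    using assms unfolding ps_ord_def by (simp add: one_enat_def)
  obtain i j where "l i j \<noteq> 0" using nz unfolding ps_zero_def by (meson ext)
  then have "\<exists>n i j. i + j = n \<and> l i j \<noteq> 0" by blast
  then have "\<exists>i j. i + j = (LEAST n. \<exists>i j. i + j = n \<and> l i j \<noteq> 0) \<and> l i j \<noteq> 0" by (rule LeastI_ex)
  then obtain i j where "i + j = 1" "l i j \<noteq> 0" unfolding L by blast
  then show ?thesis by (cases i) auto
qed

lemma main_b:
  assumes f: "convergent_ps f" and l: "convergent_ps l" and f0: "f 0 0 = 0"
    and l0: "l 0 0 = 0" and b: "l 0 1 \<noteq> 0"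
  shows "ps_dvd l f \<longleftrightarrow> ps_dvd l (ps_jac f l)"
proof
  assume "ps_dvd l f"
  then obtain h where h: "convergent_ps h" "f = ps_mul l h" unfolding ps_dvd_def by blast
  then have "ps_jac f l = ps_mul l (ps_jac h l)" by (simp add: jac_mul_l)
  then show "ps_dvd l (ps_jac f l)" unfolding ps_dvd_def using conv_jac[OF h(1) l] by blast
next
  assume "ps_dvd l (ps_jac f l)"
  then obtain k where k: "ps_jac f l = ps_mul l k" unfolding ps_dvd_def by blast
  define q where "q = qr f l"
  define r where "r = ps_sub f (ps_mul l q)"
  have rY: "r i (Suc j) = 0" for i j unfolding r_def q_def ps_sub_def using qr_eq[of l f] l0 b by simp
  have dYr: "ps_dY r = ps_zero" unfolding ps_dY_def ps_zero_def by (simp add: rY)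
  have key: "ps_mul (ps_dX r) (ps_dY l) = ps_mul l (ps_sub k (ps_jac q l))"
  proof (rule toF_inj)
    have h1: "fps_deriv (toF f) * DY (toF l) - DY (toF f) * fps_deriv (toF l) = toF l * toF k"
      using arg_cong[OF k, of toF] by (simp add: toF_jac toF_mul)
    have R: "toF r = toF f - toF l * toF q" unfolding r_def toF_sub toF_mul by (rule refl)
    have "DY (toF r) = 0" using dYr by (simp add: toF_dY[symmetric] toF_zero)
    then have h2: "DY (toF f) = DY (toF l) * toF q + toF l * DY (toF q)"
      unfolding R by (simp add: DY_diff DY_mult)
    have h3: "fps_deriv (toF r) = fps_deriv (toF f) - (fps_deriv (toF l) * toF q + toF l * fps_deriv (toF q))"
      unfolding R by simp
    show "toF (ps_mul (ps_dX r) (ps_dY l)) = toF (ps_mul l (ps_sub k (ps_jac q l)))"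
      unfolding toF_mul toF_sub toF_jac toF_dX toF_dY h3 using h1 h2 by algebra
  qed
  have sY': "ps_dX r i j = 0" if "0 < j" for i j
  proof (cases j)
    case 0 then show ?thesis using that by simp
  next
    case (Suc j') then show ?thesis by (simp add: ps_dX_def rY)
  qed
  have w0: "ps_dY l 0 0 \<noteq> 0" using b by (simp add: ps_dY_def)
  have s0: "ps_dX r i 0 = 0" for i by (rule lemB[OF key sY' w0 l0 b])
  have "r = ps_zero"
  proof (intro ext)
    fix i j
    show "r i j = ps_zero i j"
    proof (cases j)
      case (Suc j') then show ?thesis by (simp add: rY ps_zero_def)
    next
      case 0
      show ?thesis
      proof (cases i)
        case 0
        have "ps_mul l q 0 0 = l 0 0 * q 0 0" by (simp add: ps_mul_def)
        then show ?thesis using \<open>j = 0\<close> 0 f0 l0 by (simp add: r_def ps_sub_def ps_zero_def)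
      next
        case (Suc i')
        then show ?thesis using s0[of i'] \<open>j = 0\<close> by (simp add: ps_dX_def ps_zero_def del: of_nat_Suc)
      qed
    qed
  qed
  then have "f = ps_mul l q"
  proof (intro ext)
    fix i j
    assume "r = ps_zero"
    then have "r i j = 0" by (simp add: ps_zero_def)
    then show "f i j = ps_mul l q i j" by (simp add: r_def ps_sub_def)
  qed
  moreover have "convergent_ps q" unfolding q_def by (rule qr_conv[OF f l l0 b])
  ultimately show "ps_dvd l f" unfolding ps_dvd_def by (intro exI[of _ q] conjI)
qed

theorem mainTheorem1:
  fixes f l :: cps
  assumes "convergent_ps f" and "f \<noteq> ps_zero" and "f 0 0 = 0"
    and "ps_reduced f"
    and "convergent_ps l" and "l 0 0 = 0" and "ps_ord l = 1"
    and "ps_jac f l 0 0 = 0"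
  shows "\<not> ps_dvd l f \<longleftrightarrow> \<not> ps_dvd l (ps_jac f l)"
proof (cases "l 0 1 \<noteq> 0")
  case True
  then show ?thesis using main_b assms by blast
next
  case False
  then have "l 1 0 \<noteq> 0" using ord1[OF assms(7)] by blast
  then have "ps_dvd (sw l) (sw f) \<longleftrightarrow> ps_dvd (sw l) (ps_jac (sw f) (sw l))"
    using main_b[of "sw f" "sw l"] conv_sw assms by (simp add: sw_def)
  moreover have "ps_dvd (sw l) (sw f) \<longleftrightarrow> ps_dvd l f" using dvd_sw sw_sw by metis
  moreover have "ps_dvd (sw l) (ps_jac (sw f) (sw l)) \<longleftrightarrow> ps_dvd l (ps_jac f l)"
    unfolding sw_jac using dvd_sw sw_sw dvd_neg neg_neg by metis
  ultimately show ?thesis by simp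
qed


end
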